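(* Let $A=\mathbb{C}[x][y;\alpha,\delta]$ be an Ore extension of the polynomial ring $\mathbb{C}[x]$, where $\alpha$ is an automorphism of $\mathbb{C}[x]$ and $\delta$ is an $\alpha$-derivation, such that the center of the division ring of fractions $Q(A)$ is $\mathbb{C}$. Then $A$ is $LD$-stable with $LD\,A=2$ if and only if $\alpha$ is locally algebraic, i.e. every $t\in\mathbb{C}[x]$ is contained in a finite-dimensional $\alpha$-stable subspace.
   Context: $GK$ is Gelfand–Kirillov dimension over $\mathbb{C}$: $GK\,R=\sup_V\limsup_m\log(\dim V^m)/\log m$ over subframes $V$ (finite-dimensional subspaces containing $1$). Lower transcendence degree $LD$: if every subframe $V$ admits a finite-dimensional nonzero $W$ with $\dim VW=\dim W$, then $LD\,R=0$; otherwise $LD\,R=\sup_V\sup\{d>0:\exists c>0,\ \dim VW\ge\dim W+c(\dim W)^{(d-1)/d}\text{ for all finite-dimensional }W\neq0\}$. $R$ is $LD$-stable if $LD\,R=GK\,R$. *)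

theory Defs
  imports Complex_Main "HOL-Computational_Algebra.Polynomial"
    "HOL-Library.Extended_Real" "HOL-Library.Liminf_Limsup"
begin

definition complex_algebra :: "(complex \<Rightarrow> 'r::ring_1 \<Rightarrow> 'r) \<Rightarrow> bool" where
  "complex_algebra scale \<longleftrightarrow> vector_space scale \<and>
     (\<forall>c a b. scale c (a * b) = scale c a * b \<and> scale c (a * b) = a * scale c b)"

definition fd_subspace :: "(complex \<Rightarrow> 'r::ring_1 \<Rightarrow> 'r) \<Rightarrow> 'r set \<Rightarrow> bool" where
  "fd_subspace scale W \<longleftrightarrow> module.subspace scale W \<and>
     (\<exists>B. finite B \<and> W = module.span scale B)"

definition subframe :: "(complex \<Rightarrow> 'r::ring_1 \<Rightarrow> 'r) \<Rightarrow> 'r set \<Rightarrow> bool" where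
  "subframe scale V \<longleftrightarrow> fd_subspace scale V \<and> 1 \<in> V"

definition sprod :: "(complex \<Rightarrow> 'r::ring_1 \<Rightarrow> 'r) \<Rightarrow> 'r set \<Rightarrow> 'r set \<Rightarrow> 'r set" where
  "sprod scale V W = module.span scale {v * w | v w. v \<in> V \<and> w \<in> W}"

primrec spow :: "(complex \<Rightarrow> 'r::ring_1 \<Rightarrow> 'r) \<Rightarrow> 'r set \<Rightarrow> nat \<Rightarrow> 'r set" where
  "spow scale V 0 = module.span scale {1}"
| "spow scale V (Suc m) = sprod scale V (spow scale V m)"

abbreviation sdim :: "(complex \<Rightarrow> 'r::ring_1 \<Rightarrow> 'r) \<Rightarrow> 'r set \<Rightarrow> nat" where
  "sdim scale W \<equiv> vector_space.dim scale W"

definition GKdim :: "(complex \<Rightarrow> 'r::ring_1 \<Rightarrow> 'r) \<Rightarrow> ereal" where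
  "GKdim scale = (SUP V \<in> {V. subframe scale V}.
      limsup (\<lambda>m. ereal (ln (real (sdim scale (spow scale V m))) / ln (real m))))"

definition LDdim :: "(complex \<Rightarrow> 'r::ring_1 \<Rightarrow> 'r) \<Rightarrow> ereal" where
  "LDdim scale =
    (if (\<forall>V. subframe scale V \<longrightarrow>
            (\<exists>W. fd_subspace scale W \<and> W \<noteq> {0} \<and>
                 sdim scale (sprod scale V W) = sdim scale W))
     then 0
     else Sup {ereal d | d. d > 0 \<and> (\<exists>V. subframe scale V \<and>
            (\<exists>c>0. \<forall>W. fd_subspace scale W \<and> W \<noteq> {0} \<longrightarrow>
               real (sdim scale (sprod scale V W)) \<ge>
                 real (sdim scale W) + c * real (sdim scale W) powr ((d - 1) / d)))})"

definition LD_stable :: "(complex \<Rightarrow> 'r::ring_1 \<Rightarrow> 'r) \<Rightarrow> bool" where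
  "LD_stable scale \<longleftrightarrow> LDdim scale = GKdim scale"

definition poly_alg_aut :: "(complex poly \<Rightarrow> complex poly) \<Rightarrow> bool" where
  "poly_alg_aut \<alpha> \<longleftrightarrow> bij \<alpha> \<and> \<alpha> 1 = 1 \<and>
     (\<forall>p q. \<alpha> (p + q) = \<alpha> p + \<alpha> q \<and> \<alpha> (p * q) = \<alpha> p * \<alpha> q) \<and>
     (\<forall>c p. \<alpha> (smult c p) = smult c (\<alpha> p))"

text \<open>complex-linear alpha-derivation (convention y p = alpha(p) y + delta(p))\<close>
definition alpha_derivation ::
    "(complex poly \<Rightarrow> complex poly) \<Rightarrow> (complex poly \<Rightarrow> complex poly) \<Rightarrow> bool" where
  "alpha_derivation \<alpha> \<delta> \<longleftrightarrow>
     (\<forall>p q. \<delta> (p + q) = \<delta> p + \<delta> q \<and> \<delta> (p * q) = \<alpha> p * \<delta> q + \<delta> p * q) \<and>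
     (\<forall>c p. \<delta> (smult c p) = smult c (\<delta> p))"

definition poly_emb :: "(complex \<Rightarrow> 'r::ring_1 \<Rightarrow> 'r) \<Rightarrow> 'r \<Rightarrow> complex poly \<Rightarrow> 'r" where
  "poly_emb scale x p = (\<Sum>i\<le>degree p. scale (coeff p i) (x ^ i))"

definition is_ore_extension ::
    "(complex \<Rightarrow> 'r::ring_1 \<Rightarrow> 'r) \<Rightarrow> 'r \<Rightarrow> 'r \<Rightarrow>
     (complex poly \<Rightarrow> complex poly) \<Rightarrow> (complex poly \<Rightarrow> complex poly) \<Rightarrow> bool" where
  "is_ore_extension scale x y \<alpha> \<delta> \<longleftrightarrow>
     complex_algebra scale \<and>
     inj (\<lambda>(i::nat, j::nat). x ^ i * y ^ j) \<and>
     module.independent scale (range (\<lambda>(i::nat, j::nat). x ^ i * y ^ j)) \<and>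
     module.span scale (range (\<lambda>(i::nat, j::nat). x ^ i * y ^ j)) = UNIV \<and>
     (\<forall>p. y * poly_emb scale x p = poly_emb scale x (\<alpha> p) * y + poly_emb scale x (\<delta> p))"

definition is_division_ring_of_fractions :: "('r::ring_1 \<Rightarrow> 'q::division_ring) \<Rightarrow> bool" where
  "is_division_ring_of_fractions \<iota> \<longleftrightarrow> inj \<iota> \<and> \<iota> 1 = 1 \<and>
     (\<forall>a b. \<iota> (a + b) = \<iota> a + \<iota> b \<and> \<iota> (a * b) = \<iota> a * \<iota> b) \<and>
     (\<forall>q. \<exists>a b. b \<noteq> 0 \<and> q = \<iota> a * inverse (\<iota> b))"

definition ring_center :: "'q::ring \<Rightarrow> bool" where
  "ring_center z \<longleftrightarrow> (\<forall>w. z * w = w * z)"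

definition locally_algebraic :: "(complex poly \<Rightarrow> complex poly) \<Rightarrow> bool" where
  "locally_algebraic \<alpha> \<longleftrightarrow>
     (\<forall>t. \<exists>S. module.subspace (smult :: complex \<Rightarrow> complex poly \<Rightarrow> complex poly) S \<and>
            (\<exists>B. finite B \<and> S = module.span smult B) \<and> \<alpha> ` S \<subseteq> S \<and> t \<in> S)"

end

theory Submission
  imports Defs "HOL-Library.Product_Lexorder"
begin


lemma aut_basic:
  assumes "poly_alg_aut \<alpha>"
  shows "\<alpha> 0 = 0" "\<alpha> [:a:] = [:a:]" "\<alpha> (p + q) = \<alpha> p + \<alpha> q" "\<alpha> (p * q) = \<alpha> p * \<alpha> q"
    "\<alpha> 1 = 1" "surj \<alpha>"
proof -
  have add: "\<And>p q. \<alpha> (p + q) = \<alpha> p + \<alpha> q" and mul: "\<And>p q. \<alpha> (p * q) = \<alpha> p * \<alpha> q"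
    and sm: "\<And>c p. \<alpha> (smult c p) = smult c (\<alpha> p)" and one: "\<alpha> 1 = 1" and b: "bij \<alpha>"
    using assms unfolding poly_alg_aut_def by auto
  show "\<alpha> 0 = 0" using add[of 0 0] by simp
  show "\<alpha> [:a:] = [:a:]" using sm[of a 1] one by simp
  show "\<alpha> (p + q) = \<alpha> p + \<alpha> q" "\<alpha> (p * q) = \<alpha> p * \<alpha> q" "\<alpha> 1 = 1" by (fact add mul one)+
  show "surj \<alpha>" using b bij_is_surj by blast
qed

lemma aut_comp:
  assumes "poly_alg_aut \<alpha>"
  shows "\<alpha> p = pcompose p (\<alpha> [:0,1:])"
proof (induction p)
  case 0
  then show ?case using aut_basic[OF assms] by simp
next
  case (pCons a p)
  have e: "pCons a p = [:a:] + [:0,1:] * p" by (simp add: pCons_eq_iff)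
  have "\<alpha> (pCons a p) = \<alpha> [:a:] + \<alpha> [:0,1:] * \<alpha> p"
    by (subst e) (simp only: aut_basic[OF assms])
  then have "\<alpha> (pCons a p) = [:a:] + \<alpha> [:0,1:] * \<alpha> p" using aut_basic(2)[OF assms] by simp
  then show ?case using pCons.IH by (simp add: pcompose_pCons)
qed

lemma aut_deg1:
  assumes "poly_alg_aut \<alpha>"
  shows "degree (\<alpha> [:0,1:]) = 1"
proof -
  obtain p0 where "\<alpha> p0 = [:0,1:]" using aut_basic(6)[OF assms] by (metis surjD)
  then have "degree (pcompose p0 (\<alpha> [:0,1:])) = 1" using aut_comp[OF assms, of p0] by simp
  then have "degree p0 * degree (\<alpha> [:0,1:]) = 1" by (simp add: degree_pcompose)
  then show ?thesis by simp
qed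

lemma aut_degree:
  assumes "poly_alg_aut \<alpha>"
  shows "degree (\<alpha> p) = degree p"
  using aut_comp[OF assms, of p] aut_deg1[OF assms] by (simp add: degree_pcompose)

interpretation pm: module "smult :: complex \<Rightarrow> complex poly \<Rightarrow> complex poly"
  by standard (simp_all add: smult_add_right smult_add_left)

lemma locally_alg:
  assumes "poly_alg_aut \<alpha>"
  shows "locally_algebraic \<alpha>"
  unfolding locally_algebraic_def
proof
  fix t :: "complex poly"
  define n where "n = degree t"
  define B where "B = (\<lambda>i. monom (1::complex) i) ` {..n}"
  have sub: "pm.subspace {p. degree p \<le> n}"
    unfolding pm.subspace_def
    by (auto intro: order_trans[OF degree_add_le] order_trans[OF degree_smult_le])
  have eq: "pm.span B = {p. degree p \<le> n}"
  proof
    show "pm.span B \<subseteq> {p. degree p \<le> n}"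
      by (rule pm.span_minimal[OF _ sub]) (auto simp: B_def degree_monom_eq)
    show "{p. degree p \<le> n} \<subseteq> pm.span B"
    proof
      fix p :: "complex poly" assume "p \<in> {p. degree p \<le> n}"
      then have "p = (\<Sum>i\<le>n. smult (coeff p i) (monom 1 i))"
        using poly_as_sum_of_monoms'[of p n] by (simp add: smult_monom)
      also have "\<dots> \<in> pm.span B"
        by (intro pm.span_sum pm.span_scale pm.span_base) (auto simp: B_def)
      finally show "p \<in> pm.span B" .
    qed
  qed
  show "\<exists>S. pm.subspace S \<and> (\<exists>B. finite B \<and> S = pm.span B) \<and> \<alpha> ` S \<subseteq> S \<and> t \<in> S"
    apply (rule exI[of _ "{p. degree p \<le> n}"])
    using sub eq aut_degree[OF assms] by (auto simp: n_def B_def intro!: exI[of _ B])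
qed


locale ore = vector_space scale
  for scale :: "complex \<Rightarrow> 'r::ring_1 \<Rightarrow> 'r" +
  fixes x y :: 'r and \<alpha> \<delta> :: "complex poly \<Rightarrow> complex poly"
  assumes sc1: "scale c (a * b) = scale c a * b"
    and sc2: "scale c (a * b) = a * scale c b"
    and mon_inj0: "inj (\<lambda>(i::nat, j::nat). x ^ i * y ^ j)"
    and mon_indep0: "independent (range (\<lambda>(i::nat, j::nat). x ^ i * y ^ j))"
    and mon_span0: "span (range (\<lambda>(i::nat, j::nat). x ^ i * y ^ j)) = UNIV"
    and ore_rel: "y * poly_emb scale x p = poly_emb scale x (\<alpha> p) * y + poly_emb scale x (\<delta> p)"
    and aut: "poly_alg_aut \<alpha>" and der: "alpha_derivation \<alpha> \<delta>"
begin

definition mon :: "nat \<times> nat \<Rightarrow> 'r" where "mon P = x ^ snd P * y ^ fst P"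

lemma range_mon: "range mon = range (\<lambda>(i::nat, j::nat). x ^ i * y ^ j)"
  unfolding mon_def by (auto simp: image_iff) (metis fst_conv snd_conv)

lemma mon_inj: "inj mon"
  using mon_inj0 unfolding mon_def inj_def by auto

lemma mon_indep: "independent (range mon)"
  using mon_indep0 range_mon by simp

lemma mon_span: "span (range mon) = UNIV"
  using mon_span0 range_mon by simp

definition Low :: "nat \<times> nat \<Rightarrow> 'r set" where "Low P = span (mon ` {Q. Q < P})"

definition hasLM :: "'r \<Rightarrow> nat \<times> nat \<Rightarrow> bool" where
  "hasLM a P \<longleftrightarrow> (\<exists>k b. k \<noteq> 0 \<and> b \<in> Low P \<and> a = scale k (mon P) + b)"

lemma Low_mono: "P \<le> Q \<Longrightarrow> Low P \<subseteq> Low Q"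
  unfolding Low_def by (rule span_mono) auto

lemma mon_Low: "Q < P \<Longrightarrow> mon Q \<in> Low P"
  unfolding Low_def by (rule span_base) auto

lemma mon_notin_Low: "mon P \<notin> Low P"
proof
  assume "mon P \<in> Low P"
  moreover have "mon ` {Q. Q < P} \<subseteq> range mon - {mon P}"
    using mon_inj by (auto simp: inj_eq)
  ultimately have "mon P \<in> span (range mon - {mon P})"
    unfolding Low_def using span_mono by blast
  then have "dependent (range mon)" unfolding dependent_def by blast
  then show False using mon_indep by simp
qed

lemma hasLM_notin: "hasLM a P \<Longrightarrow> a \<notin> Low P"
proof
  assume "hasLM a P" "a \<in> Low P"
  then obtain k b where kb: "k \<noteq> 0" "b \<in> Low P" "a = scale k (mon P) + b" unfolding hasLM_def by blast
  then have "scale k (mon P) \<in> Low P" using \<open>a \<in> Low P\<close>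
    unfolding Low_def by (metis add_diff_cancel_right' span_diff)
  then have "scale (inverse k) (scale k (mon P)) \<in> Low P" unfolding Low_def by (rule span_scale)
  then show False using kb(1) mon_notin_Low by simp
qed

lemma hasLM_nz: "hasLM a P \<Longrightarrow> a \<noteq> 0"
  using hasLM_notin[of a P] unfolding Low_def by (auto simp: span_zero)

lemma hasLM_in_Low: "hasLM a P \<Longrightarrow> P < Q \<Longrightarrow> a \<in> Low Q"
proof -
  assume h: "hasLM a P" "P < Q"
  then obtain k b where kb: "b \<in> Low P" "a = scale k (mon P) + b" unfolding hasLM_def by blast
  have "b \<in> Low Q" using kb(1) Low_mono[OF less_imp_le[OF h(2)]] by blast
  moreover have "mon P \<in> Low Q" using mon_Low h(2) by blast
  ultimately show ?thesis unfolding kb(2) Low_def by (intro span_add span_scale)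
qed

lemma hasLM_unique: "hasLM a P \<Longrightarrow> hasLM a Q \<Longrightarrow> P = Q"
  by (metis hasLM_in_Low hasLM_notin linorder_neqE)

lemma Low_LM_less: "a \<in> Low P \<Longrightarrow> hasLM a Q \<Longrightarrow> Q < P"
  by (metis Low_mono hasLM_notin not_le subsetD)

lemma finite_support: "\<exists>S. finite S \<and> a \<in> span (mon ` S)"
proof -
  have "a \<in> span (range mon)" using mon_span by simp
  then obtain t r where "finite t" "t \<subseteq> range mon" "a = (\<Sum>v\<in>t. scale (r v) v)"
    unfolding span_explicit by blast
  moreover from \<open>finite t\<close> \<open>t \<subseteq> range mon\<close> obtain S where "finite S" "t = mon ` S"
    by (meson finite_subset_image)
  ultimately show ?thesis
    by (intro exI[of _ S]) (auto intro!: span_sum span_scale intro: span_base)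
qed

lemma exists_LM_aux: "finite S \<Longrightarrow> \<forall>a \<in> span (mon ` S). a = 0 \<or> (\<exists>P. hasLM a P)"
proof (induction S rule: finite_linorder_max_induct)
  case empty
  then show ?case by simp
next
  case (insert b A)
  show ?case
  proof
    fix a assume "a \<in> span (mon ` insert b A)"
    then obtain k where k: "a - scale k (mon b) \<in> span (mon ` A)"
      using span_breakdown_eq by auto
    have "span (mon ` A) \<subseteq> Low b" unfolding Low_def using insert(2) by (intro span_mono) auto
    show "a = 0 \<or> (\<exists>P. hasLM a P)"
    proof (cases "k = 0")
      case True
      then show ?thesis using insert(3) k by simp
    next
      case False
      then have "hasLM a b" unfolding hasLM_def using k \<open>span (mon ` A) \<subseteq> Low b\<close>
        by (intro exI[of _ k] exI[of _ "a - scale k (mon b)"]) auto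
      then show ?thesis by blast
    qed
  qed
qed

lemma exists_LM: "a \<noteq> 0 \<Longrightarrow> \<exists>P. hasLM a P"
  using finite_support[of a] exists_LM_aux by blast

lemma mult_span_left: "a \<in> span S \<Longrightarrow> c * a \<in> span ((\<lambda>s. c * s) ` S)"
proof (induction a rule: span_induct_alt)
  case base then show ?case by (simp add: span_zero)
next
  case (step k s z)
  have "c * (scale k s + z) = scale k (c * s) + c * z" by (simp add: distrib_left sc2)
  moreover have "c * s \<in> span ((\<lambda>s. c * s) ` S)" using step(1) by (intro span_base) auto
  ultimately show ?case using step by (simp add: span_add span_scale)
qed

lemma mult_span_right: "a \<in> span S \<Longrightarrow> a * c \<in> span ((\<lambda>s. s * c) ` S)"
proof (induction a rule: span_induct_alt)
  case base then show ?case by (simp add: span_zero)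
next
  case (step k s z)
  have "(scale k s + z) * c = scale k (s * c) + z * c" by (simp add: distrib_right sc1)
  moreover have "s * c \<in> span ((\<lambda>s. s * c) ` S)" using step(1) by (intro span_base) auto
  ultimately show ?case using step by (simp add: span_add span_scale)
qed

lemma x_mon: "x * mon (j, i) = mon (j, Suc i)"
  unfolding mon_def by (simp add: mult.assoc)

lemma x_Low: "b \<in> Low (j, i) \<Longrightarrow> x * b \<in> Low (j, Suc i)"
proof -
  assume "b \<in> Low (j, i)"
  then have "x * b \<in> span ((\<lambda>s. x * s) ` mon ` {Q. Q < (j,i)})" unfolding Low_def by (rule mult_span_left)
  also have "\<dots> \<subseteq> Low (j, Suc i)"
  proof (rule span_minimal)
    show "(\<lambda>s. x * s) ` mon ` {Q. Q < (j, i)} \<subseteq> Low (j, Suc i)"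
    proof safe
      fix a b :: nat assume "(a, b) < (j, i)"
      then show "x * mon (a, b) \<in> Low (j, Suc i)" unfolding x_mon by (intro mon_Low) auto
    qed
  qed (simp add: Low_def)
  finally show ?thesis .
qed

lemma hasLM_x: "hasLM a (j, i) \<Longrightarrow> hasLM (x * a) (j, Suc i)"
  unfolding hasLM_def
proof (elim exE conjE)
  fix k b assume "k \<noteq> 0" "b \<in> Low (j, i)" "a = scale k (mon (j, i)) + b"
  then show "\<exists>k b. k \<noteq> 0 \<and> b \<in> Low (j, Suc i) \<and> x * a = scale k (mon (j, Suc i)) + b"
    by (intro exI[of _ k] exI[of _ "x * b"]) (simp add: distrib_left sc2[symmetric] x_mon x_Low)
qed

end


context ore begin

lemma pe_mult: "poly_emb scale x p * r = (\<Sum>l\<le>degree p. scale (coeff p l) (x ^ l * r))"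
  unfolding poly_emb_def by (simp add: sum_distrib_right sc1)

lemma pe_monom: "poly_emb scale x (monom 1 i) = x ^ i"
proof -
  have "poly_emb scale x (monom 1 i) = (\<Sum>l\<le>i. if l = i then x ^ l else 0)"
    unfolding poly_emb_def degree_monom_eq[OF one_neq_zero] coeff_monom
    by (intro sum.cong) auto
  also have "\<dots> = x ^ i" by (simp add: sum.delta')
  finally show ?thesis .
qed

lemma xy_mon: "x ^ l * y ^ j = mon (j, l)" by (simp add: mon_def)

lemma pe_y_span: "poly_emb scale x p * y ^ j \<in> span (mon ` {(j, l) | l. l \<le> degree p})"
  unfolding pe_mult xy_mon
  by (intro span_sum span_scale span_base) auto

lemma pe_y_dec: "poly_emb scale x p * y ^ j - scale (coeff p (degree p)) (mon (j, degree p))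
   \<in> span (mon ` {(j, l) | l. l < degree p})"
proof -
  have "poly_emb scale x p * y ^ j = (\<Sum>l<Suc (degree p). scale (coeff p l) (x ^ l * y ^ j))"
    unfolding pe_mult lessThan_Suc_atMost ..
  also have "\<dots> = (\<Sum>l<degree p. scale (coeff p l) (x ^ l * y ^ j)) + scale (coeff p (degree p)) (mon (j, degree p))"
    by (simp add: mon_def)
  finally have e: "poly_emb scale x p * y ^ j - scale (coeff p (degree p)) (mon (j, degree p))
     = (\<Sum>l<degree p. scale (coeff p l) (x ^ l * y ^ j))" by simp
  show ?thesis unfolding e xy_mon
    by (intro span_sum span_scale span_base) auto
qed

lemma alpha_pow: "\<alpha> (p ^ n) = \<alpha> p ^ n"
  by (induction n) (simp_all add: aut_basic[OF aut])

definition a0 where "a0 = lead_coeff (\<alpha> [:0,1:])"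

lemma a0_nz: "a0 \<noteq> 0"
  unfolding a0_def using aut_deg1[OF aut] by (metis leading_coeff_0_iff one_neq_zero degree_0)

lemma alpha_monom: "\<alpha> (monom 1 i) = \<alpha> [:0,1:] ^ i"
  by (simp add: monom_altdef alpha_pow)

lemma deg_alpha_monom: "degree (\<alpha> (monom 1 i)) = i"
  by (simp add: aut_degree[OF aut] degree_monom_eq)

lemma lc_alpha_monom: "coeff (\<alpha> (monom 1 i)) i = a0 ^ i"
  using deg_alpha_monom[of i] by (metis alpha_monom lead_coeff_power a0_def)

lemma y_mon: "y * mon (j, i) = poly_emb scale x (\<alpha> (monom 1 i)) * y ^ Suc j
    + poly_emb scale x (\<delta> (monom 1 i)) * y ^ j"
proof -
  have "y * mon (j, i) = (y * poly_emb scale x (monom 1 i)) * y ^ j"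
    by (simp add: mon_def pe_monom mult.assoc)
  also have "\<dots> = poly_emb scale x (\<alpha> (monom 1 i)) * y ^ Suc j
    + poly_emb scale x (\<delta> (monom 1 i)) * y ^ j"
    unfolding ore_rel by (simp add: distrib_right mult.assoc)
  finally show ?thesis .
qed

lemma span_sub_Low: "(\<And>Q. Q \<in> A \<Longrightarrow> Q < P) \<Longrightarrow> span (mon ` A) \<subseteq> Low P"
  unfolding Low_def by (intro span_mono) auto

lemma y_mon_dec: "y * mon (j, i) - scale (a0 ^ i) (mon (Suc j, i)) \<in> Low (Suc j, i)"
proof -
  have e: "y * mon (j, i) - scale (a0 ^ i) (mon (Suc j, i)) =
    (poly_emb scale x (\<alpha> (monom 1 i)) * y ^ Suc j - scale (a0 ^ i) (mon (Suc j, i)))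
    + poly_emb scale x (\<delta> (monom 1 i)) * y ^ j"
    unfolding y_mon by simp
  have 1: "poly_emb scale x (\<alpha> (monom 1 i)) * y ^ Suc j - scale (a0 ^ i) (mon (Suc j, i)) \<in> Low (Suc j, i)"
    using pe_y_dec[of "\<alpha> (monom 1 i)" "Suc j"] span_sub_Low[of "{(Suc j, l) | l. l < i}" "(Suc j, i)"]
    unfolding deg_alpha_monom lc_alpha_monom by auto
  have 2: "poly_emb scale x (\<delta> (monom 1 i)) * y ^ j \<in> Low (Suc j, i)"
    using pe_y_span[of "\<delta> (monom 1 i)" j] span_sub_Low[of "{(j, l) | l. l \<le> degree (\<delta> (monom 1 i))}" "(Suc j, i)"]
    by auto
  show ?thesis unfolding e using 1 2 unfolding Low_def by (rule span_add)
qed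

lemma y_Low: "b \<in> Low (j, i) \<Longrightarrow> y * b \<in> Low (Suc j, i)"
proof -
  assume "b \<in> Low (j, i)"
  then have "y * b \<in> span ((\<lambda>s. y * s) ` mon ` {Q. Q < (j,i)})" unfolding Low_def by (rule mult_span_left)
  also have "\<dots> \<subseteq> Low (Suc j, i)"
  proof (rule span_minimal)
    show "(\<lambda>s. y * s) ` mon ` {Q. Q < (j, i)} \<subseteq> Low (Suc j, i)"
    proof safe
      fix a b :: nat assume ab: "(a, b) < (j, i)"
      have "y * mon (a, b) - scale (a0 ^ b) (mon (Suc a, b)) \<in> Low (Suc j, i)"
        using y_mon_dec[of a b] Low_mono[of "(Suc a, b)" "(Suc j, i)"] ab by auto
      moreover have "scale (a0 ^ b) (mon (Suc a, b)) \<in> Low (Suc j, i)"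
        using mon_Low[of "(Suc a, b)" "(Suc j, i)"] ab unfolding Low_def by (auto intro: span_scale)
      ultimately show "y * mon (a, b) \<in> Low (Suc j, i)" unfolding Low_def
        by (metis diff_add_cancel span_add)
    qed
  qed (simp add: Low_def)
  finally show ?thesis .
qed

lemma hasLM_y: "hasLM a (j, i) \<Longrightarrow> hasLM (y * a) (Suc j, i)"
  unfolding hasLM_def
proof (elim exE conjE)
  fix k b assume kb: "k \<noteq> 0" "b \<in> Low (j, i)" "a = scale k (mon (j, i)) + b"
  define r where "r = y * mon (j, i) - scale (a0 ^ i) (mon (Suc j, i))"
  have r: "r \<in> Low (Suc j, i)" unfolding r_def by (rule y_mon_dec)
  have "y * a = scale (k * a0 ^ i) (mon (Suc j, i)) + (scale k r + y * b)"
    unfolding kb(3) r_def by (simp add: distrib_left sc2[symmetric] scale_right_diff_distrib)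
  moreover have "scale k r + y * b \<in> Low (Suc j, i)"
    using r y_Low[OF kb(2)] unfolding Low_def by (intro span_add span_scale)
  moreover have "k * a0 ^ i \<noteq> 0" using kb(1) a0_nz by simp
  ultimately show "\<exists>k b. k \<noteq> 0 \<and> b \<in> Low (Suc j, i) \<and> y * a = scale k (mon (Suc j, i)) + b"
    by blast
qed

end


context ore begin

definition LMs :: "'r set \<Rightarrow> (nat \<times> nat) set" where "LMs W = {P. \<exists>a\<in>W. hasLM a P}"

lemma dim_LMs:
  assumes sub: "subspace W" and WB: "W = span B" and fB: "finite B"
  shows "finite (LMs W) \<and> dim W = card (LMs W)"
proof -
  define w where "w P = (SOME a. a \<in> W \<and> hasLM a P)" for P
  have w: "w P \<in> W \<and> hasLM (w P) P" if "P \<in> LMs W" for P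
    using that unfolding LMs_def w_def by (metis (mono_tags, lifting) mem_Collect_eq someI)
  have inj: "inj_on w (LMs W)"
    by (rule inj_onI) (metis w hasLM_unique)
  have ind: "independent (w ` F)" if "finite F" "F \<subseteq> LMs W" for F
    using that
  proof (induction F rule: finite_linorder_max_induct)
    case empty then show ?case using independent_empty by simp
  next
    case (insert b A)
    have "w ` A \<subseteq> Low b"
    proof
      fix z assume "z \<in> w ` A"
      then obtain q where q: "q \<in> A" "z = w q" by blast
      then have "hasLM z q" using w insert(4) by blast
      then show "z \<in> Low b" using hasLM_in_Low q(1) insert(2) by blast
    qed
    then have "span (w ` A) \<subseteq> Low b"
      unfolding Low_def by (rule span_minimal) simp
    moreover have "w b \<notin> Low b" using w[of b] insert(4) hasLM_notin by auto
    ultimately have "w b \<notin> span (w ` A)" by blast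
    then show ?case using insert independent_insertI by auto
  qed
  have fin: "finite (LMs W)"
  proof (rule ccontr)
    assume "infinite (LMs W)"
    then obtain F where F: "finite F" "card F = Suc (card B)" "F \<subseteq> LMs W"
      using infinite_arbitrarily_large by blast
    have "w ` F \<subseteq> span B" using w F(3) WB by auto
    then have "card (w ` F) \<le> card B" using independent_span_bound[OF fB ind[OF F(1,3)]] by simp
    moreover have "card (w ` F) = card F" using card_image inj_on_subset[OF inj F(3)] by blast
    ultimately show False using F(2) by simp
  qed
  have sp: "a \<in> span (w ` LMs W)" if "a \<in> W" "hasLM a P" for a P
    using that
  proof (induction P arbitrary: a rule: less_induct)
    case (less P)
    have PL: "P \<in> LMs W" using less.prems unfolding LMs_def by blast
    from less.prems(2) obtain k b where kb: "k \<noteq> 0" "b \<in> Low P" "a = scale k (mon P) + b"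
      unfolding hasLM_def by blast
    from w[OF PL] obtain k' b' where kb': "k' \<noteq> 0" "b' \<in> Low P" "w P = scale k' (mon P) + b'"
      unfolding hasLM_def by blast
    define a' where "a' = a - scale (k / k') (w P)"
    have a'W: "a' \<in> W" unfolding a'_def using less.prems(1) w[OF PL] sub
      by (intro subspace_diff subspace_scale) auto
    have "a' = b - scale (k / k') b'"
      unfolding a'_def kb(3) kb'(3) using kb'(1) by (simp add: scale_right_distrib)
    then have a'L: "a' \<in> Low P" using kb(2) kb'(2) unfolding Low_def by (simp add: span_diff span_scale)
    have "a' \<in> span (w ` LMs W)"
    proof (cases "a' = 0")
      case True then show ?thesis by (simp add: span_zero)
    next
      case False
      then obtain Q where "hasLM a' Q" using exists_LM by blast
      moreover have "Q < P" using Low_LM_less[OF a'L] calculation by blast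
      ultimately show ?thesis using less.IH a'W by blast
    qed
    moreover have "scale (k / k') (w P) \<in> span (w ` LMs W)" using PL by (intro span_scale span_base) auto
    ultimately have "a' + scale (k / k') (w P) \<in> span (w ` LMs W)" by (rule span_add)
    then show ?case unfolding a'_def by simp
  qed
  have Weq: "W = span (w ` LMs W)"
  proof
    show "W \<subseteq> span (w ` LMs W)"
    proof
      fix a assume "a \<in> W"
      show "a \<in> span (w ` LMs W)"
      proof (cases "a = 0")
        case True then show ?thesis by (simp add: span_zero)
      next
        case False then show ?thesis using exists_LM sp \<open>a \<in> W\<close> by blast
      qed
    qed
    show "span (w ` LMs W) \<subseteq> W" using w sub by (intro span_minimal) auto
  qed
  have "dim W = card (w ` LMs W)"
    using Weq dim_span_eq_card_independent[OF ind[OF fin order_refl]] by simp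
  also have "\<dots> = card (LMs W)" using card_image[OF inj] .
  finally show ?thesis using fin by simp
qed

end


lemma iso_comb:
  fixes S :: "(nat \<times> nat) set"
  assumes fin: "finite S"
  shows "real (card S) + sqrt (real (card S))
    \<le> real (card (S \<union> (\<lambda>(j,i). (j, Suc i)) ` S \<union> (\<lambda>(j,i). (Suc j, i)) ` S))"
proof -
  define U where "U = S \<union> (\<lambda>(j,i). (j, Suc i)) ` S \<union> (\<lambda>(j,i). (Suc j, i)) ` S"
  have finU: "finite U" unfolding U_def using fin by simp
  define R where "R = fst ` S"
  define C where "C = snd ` S"
  define mi where "mi j = Max {i. (j,i) \<in> S}" for j
  define mj where "mj i = Max {j. (j,i) \<in> S}" for i
  have finr: "finite {i. (j,i) \<in> S}" for j
  proof -
    have "{i. (j,i) \<in> S} \<subseteq> snd ` S" by (auto intro: rev_image_eqI)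
    then show ?thesis using finite_subset fin by blast
  qed
  have finc: "finite {j. (j,i) \<in> S}" for i
  proof -
    have "{j. (j,i) \<in> S} \<subseteq> fst ` S" by (auto intro: rev_image_eqI)
    then show ?thesis using finite_subset fin by blast
  qed
  have mi1: "(j, mi j) \<in> S" if "j \<in> R" for j
  proof -
    have "{i. (j,i) \<in> S} \<noteq> {}" using that unfolding R_def by force
    then show ?thesis using Max_in[OF finr] unfolding mi_def by blast
  qed
  have mi2: "(j, Suc (mi j)) \<notin> S" for j
    using Max_ge[OF finr, of "Suc (mi j)" j] unfolding mi_def by auto
  have mj1: "(mj i, i) \<in> S" if "i \<in> C" for i
  proof -
    have "{j. (j,i) \<in> S} \<noteq> {}" using that unfolding C_def by force
    then show ?thesis using Max_in[OF finc] unfolding mj_def by blast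
  qed
  have mj2: "(Suc (mj i), i) \<notin> S" for i
    using Max_ge[OF finc, of "Suc (mj i)" i] unfolding mj_def by auto
  define TR where "TR = (\<lambda>j. (j, Suc (mi j))) ` R"
  define TC where "TC = (\<lambda>i. (Suc (mj i), i)) ` C"
  have cTR: "card TR = card R" unfolding TR_def by (rule card_image) (auto simp: inj_on_def)
  have cTC: "card TC = card C" unfolding TC_def by (rule card_image) (auto simp: inj_on_def)
  have finR: "finite R" "finite C" unfolding R_def C_def using fin by auto
  have SU: "S \<subseteq> U" unfolding U_def by (rule Un_upper1[THEN subset_trans]) (rule Un_upper1)
  have finTR: "finite TR" "finite TC" unfolding TR_def TC_def using finR by auto
  have TRU: "TR \<subseteq> U"
  proof
    fix z assume "z \<in> TR"
    then obtain j where j: "j \<in> R" "z = (j, Suc (mi j))" unfolding TR_def by blast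
    have "z = (\<lambda>(j,i). (j, Suc i)) (j, mi j)" using j by simp
    then have "z \<in> (\<lambda>(j,i). (j, Suc i)) ` S" using mi1[OF j(1)] by blast
    then show "z \<in> U" unfolding U_def by blast
  qed
  have TRS: "S \<inter> TR = {}" unfolding TR_def using mi2 by auto
  have "card (S \<union> TR) = card S + card R" using card_Un_disjoint[OF fin finTR(1) TRS] cTR by simp
  moreover have "card (S \<union> TR) \<le> card U" using card_mono[OF finU] SU TRU by (metis Un_least)
  ultimately have cR: "card S + card R \<le> card U" by simp
  have TCU: "TC \<subseteq> U"
  proof
    fix z assume "z \<in> TC"
    then obtain i where i: "i \<in> C" "z = (Suc (mj i), i)" unfolding TC_def by blast
    have "z = (\<lambda>(j,i). (Suc j, i)) (mj i, i)" using i by simp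
    then have "z \<in> (\<lambda>(j,i). (Suc j, i)) ` S" using mj1[OF i(1)] by blast
    then show "z \<in> U" unfolding U_def by blast
  qed
  have TCS: "S \<inter> TC = {}" unfolding TC_def using mj2 by auto
  have "card (S \<union> TC) = card S + card C" using card_Un_disjoint[OF fin finTR(2) TCS] cTC by simp
  moreover have "card (S \<union> TC) \<le> card U" using card_mono[OF finU] SU TCU by (metis Un_least)
  ultimately have cC: "card S + card C \<le> card U" by simp
  have "S \<subseteq> R \<times> C" unfolding R_def C_def by force
  then have "card S \<le> card (R \<times> C)" using card_mono[of "R \<times> C" S] finR by simp
  also have "\<dots> = card R * card C" by (simp add: card_cartesian_product)
  also have "\<dots> \<le> max (card R) (card C) * max (card R) (card C)" by (intro mult_le_mono) auto
  finally have "real (card S) \<le> real (max (card R) (card C)) * real (max (card R) (card C))"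
    by (simp only: of_nat_le_iff of_nat_mult[symmetric])
  then have "sqrt (real (card S)) \<le> sqrt (real (max (card R) (card C)) * real (max (card R) (card C)))"
    by (rule real_sqrt_le_mono)
  then have sq: "sqrt (real (card S)) \<le> real (max (card R) (card C))"
    by simp
  have "max (card R) (card C) + card S \<le> card U" using cR cC by simp
  then have "real (max (card R) (card C)) + real (card S) \<le> real (card U)" by (simp only: of_nat_add[symmetric] of_nat_le_iff)
  then show ?thesis using sq unfolding U_def by linarith
qed


context ore begin

lemma prod_mem: "v \<in> V \<Longrightarrow> w \<in> W \<Longrightarrow> v * w \<in> sprod scale V W"
  unfolding sprod_def by (rule span_base) blast

lemma sprod_sub: "subspace U \<Longrightarrow> (\<And>v w. v \<in> V \<Longrightarrow> w \<in> W \<Longrightarrow> v * w \<in> U) \<Longrightarrow> sprod scale V W \<subseteq> U"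
  unfolding sprod_def by (rule span_minimal) auto

lemma sprod_subspace: "subspace (sprod scale V W)"
  unfolding sprod_def by simp

lemma sprod_span: "sprod scale (span B1) (span B2) = span ((\<lambda>(a,b). a * b) ` (B1 \<times> B2))"
proof
  define P where "P = (\<lambda>(a,b). a * b) ` (B1 \<times> B2)"
  show "sprod scale (span B1) (span B2) \<subseteq> span ((\<lambda>(a,b). a * b) ` (B1 \<times> B2))"
  proof (rule sprod_sub[OF subspace_span])
    fix v w assume v: "v \<in> span B1" and w: "w \<in> span B2"
    have "v * w \<in> span ((\<lambda>s. s * w) ` B1)" by (rule mult_span_right[OF v])
    also have "\<dots> \<subseteq> span P"
    proof (rule span_minimal[OF _ subspace_span], safe)
      fix b1 assume "b1 \<in> B1"
      have "b1 * w \<in> span ((\<lambda>s. b1 * s) ` B2)" by (rule mult_span_left[OF w])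
      also have "\<dots> \<subseteq> span P" using \<open>b1 \<in> B1\<close> unfolding P_def by (intro span_mono) auto
      finally show "b1 * w \<in> span P" .
    qed
    finally show "v * w \<in> span ((\<lambda>(a,b). a * b) ` (B1 \<times> B2))" unfolding P_def .
  qed
  show "span ((\<lambda>(a,b). a * b) ` (B1 \<times> B2)) \<subseteq> sprod scale (span B1) (span B2)"
    by (rule span_minimal[OF _ sprod_subspace]) (auto intro!: prod_mem span_base)
qed

lemma fd_sprod:
  assumes "fd_subspace scale V" "fd_subspace scale W"
  shows "fd_subspace scale (sprod scale V W)"
proof -
  obtain B1 B2 where "finite B1" "V = span B1" "finite B2" "W = span B2"
    using assms unfolding fd_subspace_def by blast
  then show ?thesis unfolding fd_subspace_def using sprod_span sprod_subspace
    by (metis finite_SigmaI finite_imageI)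
qed

lemma fd_spow: "fd_subspace scale V \<Longrightarrow> fd_subspace scale (spow scale V m)"
proof (induction m)
  case 0
  then show ?case unfolding fd_subspace_def by (auto intro!: exI[of _ "{1}"])
next
  case (Suc m)
  then show ?case using fd_sprod by simp
qed

lemma one_spow: "1 \<in> V \<Longrightarrow> 1 \<in> spow scale V m"
  by (induction m) (auto intro: span_base dest: prod_mem[of 1 V 1])

lemma fd_dim_LMs: "fd_subspace scale W \<Longrightarrow> finite (LMs W) \<and> dim W = card (LMs W)"
  unfolding fd_subspace_def using dim_LMs by blast

lemma fd_dim_pos: "fd_subspace scale W \<Longrightarrow> W \<noteq> {0} \<Longrightarrow> dim W \<ge> 1"
proof -
  assume a: "fd_subspace scale W" "W \<noteq> {0}"
  then have "0 \<in> W" unfolding fd_subspace_def using subspace_0 by blast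
  then obtain w where "w \<in> W" "w \<noteq> 0" using a(2) by blast
  then obtain P where "hasLM w P" using exists_LM by blast
  then have "P \<in> LMs W" unfolding LMs_def using \<open>w \<in> W\<close> by blast
  then have "card (LMs W) \<ge> 1" using fd_dim_LMs[OF a(1)] by (metis One_nat_def Suc_leI card_gt_0_iff empty_iff)
  then show ?thesis using fd_dim_LMs[OF a(1)] by simp
qed

definition V0 where "V0 = span {1, x, y}"

lemma V0_subframe: "subframe scale V0"
  unfolding subframe_def fd_subspace_def V0_def by (auto intro: span_base intro!: exI[of _ "{1,x,y}"])

lemma V0_iso:
  assumes W: "fd_subspace scale W"
  shows "real (dim W) + sqrt (real (dim W)) \<le> real (dim (sprod scale V0 W))"
proof -
  define S where "S = LMs W"
  have finS: "finite S" and dW: "dim W = card S" using fd_dim_LMs[OF W] unfolding S_def by auto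
  have fdP: "fd_subspace scale (sprod scale V0 W)"
    using fd_sprod[OF _ W] V0_subframe unfolding subframe_def by blast
  have sub: "S \<union> (\<lambda>(j,i). (j, Suc i)) ` S \<union> (\<lambda>(j,i). (Suc j, i)) ` S \<subseteq> LMs (sprod scale V0 W)"
  proof safe
    fix j i assume "(j, i) \<in> S"
    then obtain a where a: "a \<in> W" "hasLM a (j, i)" unfolding S_def LMs_def by blast
    have "1 \<in> V0" "x \<in> V0" "y \<in> V0" unfolding V0_def by (auto intro: span_base)
    then have "1 * a \<in> sprod scale V0 W" "x * a \<in> sprod scale V0 W" "y * a \<in> sprod scale V0 W"
      using a(1) prod_mem by blast+
    then show "(j, i) \<in> LMs (sprod scale V0 W)" "(j, Suc i) \<in> LMs (sprod scale V0 W)"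
      "(Suc j, i) \<in> LMs (sprod scale V0 W)"
      unfolding LMs_def using a(2) hasLM_x[OF a(2)] hasLM_y[OF a(2)] by auto
  qed
  have "card (S \<union> (\<lambda>(j,i). (j, Suc i)) ` S \<union> (\<lambda>(j,i). (Suc j, i)) ` S) \<le> dim (sprod scale V0 W)"
    using card_mono[OF _ sub] fd_dim_LMs[OF fdP] by simp
  then have "real (card (S \<union> (\<lambda>(j,i). (j, Suc i)) ` S \<union> (\<lambda>(j,i). (Suc j, i)) ` S)) \<le> real (dim (sprod scale V0 W))"
    by (simp only: of_nat_le_iff)
  then show ?thesis using iso_comb[OF finS] unfolding dW by linarith
qed

end


context ore begin

definition Dd where "Dd = degree (\<delta> [:0,1:])"

lemma der_add: "\<delta> (p + q) = \<delta> p + \<delta> q" and der_mult: "\<delta> (p * q) = \<alpha> p * \<delta> q + \<delta> p * q"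
  using der unfolding alpha_derivation_def by auto

lemma delta_one: "\<delta> 1 = 0"
proof -
  have "\<delta> (1 * 1) = \<alpha> 1 * \<delta> 1 + \<delta> 1 * 1" by (rule der_mult)
  then show ?thesis using aut_basic(5)[OF aut] by simp
qed

lemma deg_delta_monom: "degree (\<delta> (monom 1 i)) \<le> i + Dd"
proof (induction i)
  case 0
  then show ?case using delta_one by (simp add: monom_0 one_pCons[symmetric])
next
  case (Suc i)
  have e: "monom (1::complex) (Suc i) = [:0,1:] * monom 1 i" by (simp add: monom_Suc)
  have "degree (\<alpha> [:0,1:] * \<delta> (monom 1 i)) \<le> Suc (i + Dd)"
    using degree_mult_le[of "\<alpha> [:0,1:]" "\<delta> (monom 1 i)"] aut_deg1[OF aut] Suc.IH by simp
  moreover have "degree (\<delta> [:0,1:] * monom 1 i) \<le> Suc (i + Dd)"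
    using degree_mult_le[of "\<delta> [:0,1:]" "monom 1 i"] unfolding Dd_def by (simp add: degree_monom_eq)
  ultimately show ?case unfolding e der_mult
    by (metis add_Suc degree_add_le)
qed

definition F :: "nat \<Rightarrow> 'r set" where
  "F n = span (mon ` {P. snd P + Suc Dd * fst P \<le> n})"

lemma F_mono: "n \<le> n' \<Longrightarrow> F n \<subseteq> F n'"
  unfolding F_def by (intro span_mono) auto

lemma mon_F: "snd P + Suc Dd * fst P \<le> n \<Longrightarrow> mon P \<in> F n"
  unfolding F_def by (intro span_base) auto

lemma F_subspace: "subspace (F n)" unfolding F_def by simp

lemma x_F: "z \<in> F n \<Longrightarrow> x * z \<in> F (Suc n)"
proof -
  assume "z \<in> F n"
  then have "x * z \<in> span ((\<lambda>s. x * s) ` mon ` {P. snd P + Suc Dd * fst P \<le> n})"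
    unfolding F_def by (rule mult_span_left)
  also have "\<dots> \<subseteq> F (Suc n)"
  proof (rule span_minimal[OF _ F_subspace], safe)
    fix j i assume "snd (j, i) + Suc Dd * fst (j, i) \<le> n"
    then show "x * mon (j, i) \<in> F (Suc n)" unfolding x_mon by (intro mon_F) auto
  qed
  finally show ?thesis .
qed

lemma pe_y_F: "degree p + Suc Dd * j \<le> n \<Longrightarrow> poly_emb scale x p * y ^ j \<in> F n"
proof -
  assume a: "degree p + Suc Dd * j \<le> n"
  have "span (mon ` {(j, l) | l. l \<le> degree p}) \<subseteq> F n"
    unfolding F_def using a by (intro span_mono) auto
  then show ?thesis using pe_y_span by blast
qed

lemma y_F: "z \<in> F n \<Longrightarrow> y * z \<in> F (n + Suc Dd)"
proof -
  assume "z \<in> F n"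
  then have "y * z \<in> span ((\<lambda>s. y * s) ` mon ` {P. snd P + Suc Dd * fst P \<le> n})"
    unfolding F_def by (rule mult_span_left)
  also have "\<dots> \<subseteq> F (n + Suc Dd)"
  proof (rule span_minimal[OF _ F_subspace], safe)
    fix j i assume a: "snd (j, i) + Suc Dd * fst (j, i) \<le> n"
    have 1: "poly_emb scale x (\<alpha> (monom 1 i)) * y ^ Suc j \<in> F (n + Suc Dd)"
      using a by (intro pe_y_F) (simp add: deg_alpha_monom)
    have 2: "poly_emb scale x (\<delta> (monom 1 i)) * y ^ j \<in> F (n + Suc Dd)"
      using a deg_delta_monom[of i] by (intro pe_y_F) simp
    show "y * mon (j, i) \<in> F (n + Suc Dd)" unfolding y_mon using subspace_add[OF F_subspace 1 2] .
  qed
  finally show ?thesis .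
qed

lemma xpow_F: "z \<in> F n \<Longrightarrow> x ^ i * z \<in> F (n + i)"
  by (induction i) (auto simp: mult.assoc dest: x_F)

lemma ypow_F: "z \<in> F n \<Longrightarrow> y ^ j * z \<in> F (n + Suc Dd * j)"
proof (induction j)
  case 0 then show ?case by simp
next
  case (Suc j)
  then have "y * (y ^ j * z) \<in> F (n + Suc Dd * j + Suc Dd)" by (intro y_F)
  then show ?case by (simp add: mult.assoc algebra_simps)
qed

lemma F_mult: "v \<in> F a \<Longrightarrow> w \<in> F b \<Longrightarrow> v * w \<in> F (a + b)"
proof -
  assume v: "v \<in> F a" and w: "w \<in> F b"
  have "v * w \<in> span ((\<lambda>s. s * w) ` mon ` {P. snd P + Suc Dd * fst P \<le> a})"
    using v unfolding F_def by (rule mult_span_right)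
  also have "\<dots> \<subseteq> F (a + b)"
  proof (rule span_minimal[OF _ F_subspace], safe)
    fix j i assume ji: "snd (j, i) + Suc Dd * fst (j, i) \<le> a"
    have "mon (j, i) * w = x ^ i * (y ^ j * w)" by (simp add: mon_def mult.assoc)
    also have "\<dots> \<in> F (b + Suc Dd * j + i)" by (intro xpow_F ypow_F w)
    also have "\<dots> \<subseteq> F (a + b)" using ji by (intro F_mono) simp
    finally show "mon (j, i) * w \<in> F (a + b)" .
  qed
  finally show ?thesis .
qed

lemma in_some_F: "\<exists>n. a \<in> F n"
proof -
  obtain S where S: "finite S" "a \<in> span (mon ` S)" using finite_support by blast
  define n where "n = (\<Sum>P\<in>S. snd P + Suc Dd * fst P)"
  have "mon ` S \<subseteq> F n"
  proof safe
    fix j i assume "(j, i) \<in> S"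
    then have "snd (j, i) + Suc Dd * fst (j, i) \<le> n"
      unfolding n_def using member_le_sum[OF _ _ S(1), of "(j,i)" "\<lambda>P. snd P + Suc Dd * fst P"] by simp
    then show "mon (j, i) \<in> F n" by (rule mon_F)
  qed
  then have "span (mon ` S) \<subseteq> F n" by (rule span_minimal[OF _ F_subspace])
  then show ?thesis using S(2) by blast
qed

lemma finite_set_in_F: "finite B \<Longrightarrow> \<exists>n. B \<subseteq> F n"
proof (induction B rule: finite_induct)
  case empty then show ?case by simp
next
  case (insert b B)
  obtain n where "B \<subseteq> F n" using insert by blast
  moreover obtain n' where "b \<in> F n'" using in_some_F by blast
  ultimately have "insert b B \<subseteq> F (n + n')" using F_mono[of n "n + n'"] F_mono[of n' "n + n'"] by auto
  then show ?case by blast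
qed

lemma dim_F_le: "V \<subseteq> F n \<Longrightarrow> dim V \<le> (n + 1) ^ 2"
proof -
  assume V: "V \<subseteq> F n"
  have sub: "{P. snd P + Suc Dd * fst P \<le> n} \<subseteq> {..n} \<times> {..n}"
  proof
    fix P assume "P \<in> {P. snd P + Suc Dd * fst P \<le> n}"
    then have a: "snd P + Suc Dd * fst P \<le> n" by simp
    have "fst P \<le> Suc Dd * fst P" by simp
    then have "fst P \<le> n" "snd P \<le> n" using a by linarith+
    then show "P \<in> {..n} \<times> {..n}" by (simp add: mem_Times_iff)
  qed
  have fin: "finite {P. snd P + Suc Dd * fst P \<le> n}" using finite_subset[OF sub] by blast
  have "dim V \<le> card (mon ` {P. snd P + Suc Dd * fst P \<le> n})"
    using V fin unfolding F_def by (intro dim_le_card) auto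
  also have "\<dots> \<le> card {P. snd P + Suc Dd * fst P \<le> n}" using fin by (rule card_image_le)
  also have "\<dots> \<le> card ({..n} \<times> {..n})" using sub by (intro card_mono) auto
  also have "\<dots> = (n + 1) ^ 2" by (simp add: card_cartesian_product power2_eq_square)
  finally show ?thesis .
qed

lemma spow_F:
  assumes "V \<subseteq> F N"
  shows "spow scale V m \<subseteq> F (N * m)"
proof (induction m)
  case 0
  have "span {1} \<subseteq> F 0"
    using mon_F[of "(0,0)" 0] by (intro span_minimal[OF _ F_subspace]) (simp add: mon_def)
  then show ?case by simp
next
  case (Suc m)
  have "sprod scale V (spow scale V m) \<subseteq> F (N + N * m)"
    using assms Suc by (intro sprod_sub[OF F_subspace]) (auto intro: F_mult)
  then show ?case by simp
qed

lemma subframe_growth_upper: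
  assumes "subframe scale V"
  shows "\<exists>A::real. A \<ge> 1 \<and> (\<forall>m \<ge> 1. real (dim (spow scale V m)) \<le> A * real m ^ 2)"
proof -
  obtain B where B: "finite B" "V = span B" using assms unfolding subframe_def fd_subspace_def by blast
  obtain N where "B \<subseteq> F N" using finite_set_in_F[OF B(1)] by blast
  then have "V \<subseteq> F N" using B(2) span_minimal[OF _ F_subspace] by blast
  have "real (dim (spow scale V m)) \<le> real (N + 1) ^ 2 * real m ^ 2" if "m \<ge> 1" for m
  proof -
    have "dim (spow scale V m) \<le> (N * m + 1) ^ 2" by (intro dim_F_le spow_F \<open>V \<subseteq> F N\<close>)
    also have "\<dots> \<le> ((N + 1) * m) ^ 2" using that by (intro power_mono) (auto simp: algebra_simps)
    finally have "dim (spow scale V m) \<le> ((N + 1) * m) ^ 2" .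
    then have "real (dim (spow scale V m)) \<le> real (((N + 1) * m) ^ 2)" by (simp only: of_nat_le_iff)
    also have "real (((N + 1) * m) ^ 2) = real (N + 1) ^ 2 * real m ^ 2"
      by (simp only: of_nat_power of_nat_mult power_mult_distrib)
    finally show ?thesis .
  qed
  moreover have "real (N + 1) ^ 2 \<ge> 1" by simp
  ultimately show ?thesis by blast
qed

end


lemma powr_diff_le:
  fixes a b d :: real
  assumes a: "0 < a" and ab: "a \<le> b" and d: "d \<ge> 1"
  shows "b powr d - a powr d \<le> d * b powr (d - 1) * (b - a)"
proof (cases "a = b")
  case True then show ?thesis by simp
next
  case False
  then have "a < b" using ab by simp
  have "\<exists>z. a < z \<and> z < b \<and> b powr d - a powr d = (b - a) * (d * z powr (d - 1))"
    by (rule MVT2[OF \<open>a < b\<close>]) (use a in \<open>auto intro!: has_real_derivative_powr\<close>)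
  then obtain z where z: "a < z" "z < b" "b powr d - a powr d = (b - a) * (d * z powr (d - 1))" by blast
  have "z powr (d - 1) \<le> b powr (d - 1)" using z a d by (intro powr_mono2) auto
  then have dz: "d * z powr (d - 1) \<le> d * b powr (d - 1)" using d by (intro mult_left_mono) auto
  have "(b - a) * (d * z powr (d - 1)) \<le> (b - a) * (d * b powr (d - 1))"
    using mult_left_mono[OF dz, of "b - a"] ab by simp
  then show ?thesis using z(3) by (simp only: mult.commute mult.left_commute)
qed

lemma growth:
  fixes f :: "nat \<Rightarrow> real" and c d :: real
  assumes c: "c > 0" and d: "d \<ge> 1" and f0: "f 0 \<ge> 1"
    and step: "\<And>m. f (Suc m) \<ge> f m + c * f m powr ((d - 1) / d)"
  shows "\<exists>\<kappa>>0. \<forall>m. (\<kappa> * real m) powr d \<le> f m"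
proof -
  have f1: "f m \<ge> 1" for m
  proof (induction m)
    case 0 then show ?case using f0 .
  next
    case (Suc m)
    have "c * f m powr ((d - 1) / d) \<ge> 0" using c by simp
    then show ?case using step[of m] Suc by linarith
  qed
  define \<kappa> where "\<kappa> = min 1 (c / (d * 2 powr (d - 1)))"
  have kpos: "\<kappa> > 0" unfolding \<kappa>_def using c d by simp
  have k1: "\<kappa> \<le> 1" unfolding \<kappa>_def by simp
  have dpos: "d * 2 powr (d - 1) > 0" using d by simp
  have "\<kappa> \<le> c / (d * 2 powr (d - 1))" unfolding \<kappa>_def by simp
  then have kc: "\<kappa> * (d * 2 powr (d - 1)) \<le> c" by (simp only: pos_le_divide_eq[OF dpos])
  have main: "(\<kappa> * real m) powr d \<le> f m" for m
  proof (induction m)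
    case 0 then show ?case using f1[of 0] by simp
  next
    case (Suc m)
    show ?case
    proof (cases "m = 0")
      case True
      have "\<kappa> powr d \<le> 1" using kpos k1 d by (intro powr_le1) auto
      then show ?thesis using True f1[of 1] by simp
    next
      case False
      then have m1: "real m \<ge> 1" by simp
      define t where "t = (\<kappa> * real m) powr d"
      define a where "a = \<kappa> * real m"
      define b where "b = \<kappa> * real (Suc m)"
      have apos: "a > 0" unfolding a_def using kpos m1 by simp
      have ab: "a \<le> b" unfolding a_def b_def using kpos by simp
      have e: "d * ((d - 1) / d) = d - 1" using d by (simp add: field_simps)
      have te: "t powr ((d - 1) / d) = a powr (d - 1)"
        by (simp only: t_def a_def powr_powr e)
      have "t \<le> f m" using Suc.IH t_def by simp
      then have "t powr ((d - 1) / d) \<le> f m powr ((d - 1) / d)"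
        using d by (intro powr_mono2) (auto simp: t_def)
      then have "t + c * t powr ((d - 1) / d) \<le> f m + c * f m powr ((d - 1) / d)"
        using \<open>t \<le> f m\<close> c by (intro add_mono mult_left_mono) auto
      moreover have "t + c * t powr ((d - 1) / d) = a powr d + c * a powr (d - 1)"
        unfolding te by (simp add: t_def a_def)
      ultimately have lower: "a powr d + c * a powr (d - 1) \<le> f (Suc m)"
        using step[of m] by linarith
      have "b powr d - a powr d \<le> d * b powr (d - 1) * (b - a)" by (rule powr_diff_le[OF apos ab d])
      also have "b - a = \<kappa>" unfolding a_def b_def by (simp add: algebra_simps)
      also have "b powr (d - 1) \<le> (2 * a) powr (d - 1)"
        unfolding a_def b_def using kpos m1 d by (intro powr_mono2) auto
      then have "d * b powr (d - 1) * \<kappa> \<le> d * (2 * a) powr (d - 1) * \<kappa>"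
        using d kpos by (intro mult_right_mono mult_left_mono) auto
      also have "d * (2 * a) powr (d - 1) * \<kappa> = (\<kappa> * (d * 2 powr (d - 1))) * a powr (d - 1)"
        using apos by (simp add: powr_mult)
      also have "\<dots> \<le> c * a powr (d - 1)" using kc by (intro mult_right_mono) auto
      finally have "b powr d \<le> a powr d + c * a powr (d - 1)" by linarith
      then show ?thesis using lower unfolding b_def by linarith
    qed
  qed
  then show ?thesis using kpos by blast
qed

lemma poly_growth_contra:
  fixes \<kappa> d A :: real
  assumes k: "\<kappa> > 0" and d: "d > 2"
    and le: "\<forall>m::nat. m \<ge> 1 \<longrightarrow> (\<kappa> * real m) powr d \<le> A * real m ^ 2"
  shows False
proof -
  define B where "B = \<bar>A\<bar> / \<kappa> powr d + 1"
  have "\<bar>A\<bar> / \<kappa> powr d \<ge> 0" by simp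
  then have Bpos: "B > 0" unfolding B_def by linarith
  define m where "m = nat (ceiling (B powr (1 / (d - 2)))) + 1"
  have m1: "m \<ge> 1" unfolding m_def by simp
  have "real m \<ge> B powr (1 / (d - 2))" unfolding m_def by linarith
  then have "real m powr (d - 2) \<ge> (B powr (1 / (d - 2))) powr (d - 2)"
    using d by (intro powr_mono2) auto
  also have "(B powr (1 / (d - 2))) powr (d - 2) = B" using d Bpos by (simp add: powr_powr)
  finally have mB: "real m powr (d - 2) \<ge> B" .
  have "real m powr d = real m powr (d - 2) * real m powr 2"
    using powr_add[of "real m" "d - 2" 2] by simp
  then have "(\<kappa> * real m) powr d = \<kappa> powr d * (real m powr (d - 2) * real m powr 2)"
    by (simp add: powr_mult)
  also have "real m powr 2 = real m ^ 2" using m1 by (simp add: powr_realpow)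
  finally have eq: "(\<kappa> * real m) powr d = \<kappa> powr d * real m powr (d - 2) * real m ^ 2" by simp
  have "\<kappa> powr d * B \<le> \<kappa> powr d * real m powr (d - 2)" using mB k by (intro mult_left_mono) auto
  moreover have "\<kappa> powr d * B = \<bar>A\<bar> + \<kappa> powr d" unfolding B_def using k by (simp add: field_simps)
  ultimately have "\<bar>A\<bar> + \<kappa> powr d \<le> \<kappa> powr d * real m powr (d - 2)" by simp
  then have "(\<bar>A\<bar> + \<kappa> powr d) * real m ^ 2 \<le> (\<kappa> * real m) powr d"
    unfolding eq by (intro mult_right_mono) auto
  moreover have "(\<kappa> * real m) powr d \<le> A * real m ^ 2" using le m1 by blast
  moreover have "\<kappa> powr d * real m ^ 2 > 0" using k m1 by simp
  moreover have "A * real m ^ 2 \<le> \<bar>A\<bar> * real m ^ 2" by (intro mult_right_mono) auto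
  ultimately show False by (simp add: algebra_simps)
qed

lemma ln_ratio_lim: "((\<lambda>m::nat. ereal (2 + C / ln (real m))) \<longlongrightarrow> ereal 2) sequentially"
proof -
  have "filterlim (\<lambda>m::nat. ln (real m)) at_top sequentially"
    by (rule filterlim_compose[OF ln_at_top filterlim_real_sequentially])
  then have "((\<lambda>m::nat. C / ln (real m)) \<longlongrightarrow> 0) sequentially"
    by (intro tendsto_divide_0[OF tendsto_const] filterlim_at_top_imp_at_infinity)
  then have "((\<lambda>m::nat. 2 + C / ln (real m)) \<longlongrightarrow> 2 + 0) sequentially"
    by (intro tendsto_add tendsto_const)
  then show ?thesis by (simp add: lim_ereal)
qed

lemma limsup_upper:
  fixes f :: "nat \<Rightarrow> real"
  assumes A: "A \<ge> 1" and up: "\<And>m. m \<ge> 1 \<Longrightarrow> f m \<le> A * real m ^ 2" and pos: "\<And>m. f m \<ge> 1"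
  shows "limsup (\<lambda>m. ereal (ln (f m) / ln (real m))) \<le> 2"
proof -
  have ev: "eventually (\<lambda>m. ereal (ln (f m) / ln (real m)) \<le> ereal (2 + ln A / ln (real m))) sequentially"
    using eventually_ge_at_top[of 2]
  proof eventually_elim
    case (elim m)
    have lnm: "ln (real m) > 0" using elim by simp
    have "ln (f m) \<le> ln (A * real m ^ 2)" using pos[of m] up[of m] elim by simp
    also have "\<dots> = ln A + 2 * ln (real m)" using A elim by (simp add: ln_mult ln_realpow)
    finally have "ln (f m) / ln (real m) \<le> (ln A + 2 * ln (real m)) / ln (real m)"
      using lnm by (intro divide_right_mono) auto
    also have "\<dots> = 2 + ln A / ln (real m)" using lnm by (simp add: field_simps)
    finally show ?case by simp
  qed
  have "limsup (\<lambda>m. ereal (ln (f m) / ln (real m))) \<le> limsup (\<lambda>m. ereal (2 + ln A / ln (real m)))"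
    by (rule Limsup_mono[OF ev])
  also have "\<dots> = 2" using lim_imp_Limsup[OF _ ln_ratio_lim] by simp
  finally show ?thesis .
qed

lemma limsup_lower:
  fixes f :: "nat \<Rightarrow> real"
  assumes k: "\<kappa> > 0" and low: "\<And>m. (\<kappa> * real m) powr 2 \<le> f m"
  shows "limsup (\<lambda>m. ereal (ln (f m) / ln (real m))) \<ge> 2"
proof -
  have ev: "eventually (\<lambda>m. ereal (2 + 2 * ln \<kappa> / ln (real m)) \<le> ereal (ln (f m) / ln (real m))) sequentially"
    using eventually_ge_at_top[of 2]
  proof eventually_elim
    case (elim m)
    have lnm: "ln (real m) > 0" using elim by simp
    have km: "\<kappa> * real m > 0" using k elim by simp
    have "ln ((\<kappa> * real m) powr 2) = 2 * ln (\<kappa> * real m)"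
      by (rule ln_powr)
    also have "\<dots> = 2 * ln \<kappa> + 2 * ln (real m)" using k elim by (simp add: ln_mult algebra_simps)
    finally have "2 * ln \<kappa> + 2 * ln (real m) = ln ((\<kappa> * real m) powr 2)" ..
    note calculation = this
    have "(\<kappa> * real m) powr 2 > 0" using k elim by simp
    then have fpos: "f m > 0" using low[of m] by linarith
    have "ln ((\<kappa> * real m) powr 2) \<le> ln (f m)"
      using low[of m] \<open>(\<kappa> * real m) powr 2 > 0\<close> fpos by (simp only: ln_le_cancel_iff)
    with calculation have "2 * ln \<kappa> + 2 * ln (real m) \<le> ln (f m)" by simp
    then have "(2 * ln \<kappa> + 2 * ln (real m)) / ln (real m) \<le> ln (f m) / ln (real m)"
      using lnm by (intro divide_right_mono) auto
    moreover have "(2 * ln \<kappa> + 2 * ln (real m)) / ln (real m) = 2 + 2 * ln \<kappa> / ln (real m)"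
      using lnm by (simp add: field_simps)
    ultimately show ?case by simp
  qed
  have "2 = limsup (\<lambda>m. ereal (2 + 2 * ln \<kappa> / ln (real m)))"
    using lim_imp_Limsup[OF _ ln_ratio_lim] by simp
  also have "\<dots> \<le> limsup (\<lambda>m. ereal (ln (f m) / ln (real m)))"
    by (rule Limsup_mono[OF ev])
  finally show ?thesis .
qed


context ore begin

lemma spow_fd: "subframe scale V \<Longrightarrow> fd_subspace scale (spow scale V m)"
  unfolding subframe_def using fd_spow by blast

lemma spow_nz: "subframe scale V \<Longrightarrow> spow scale V m \<noteq> {0}"
  unfolding subframe_def using one_spow[of V m] by auto

lemma spow_dim_pos: "subframe scale V \<Longrightarrow> real (dim (spow scale V m)) \<ge> 1"
  using fd_dim_pos[OF spow_fd spow_nz] by simp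

lemma LD_set_le2:
  assumes d: "d > 0" and V: "subframe scale V" and c: "c > 0"
    and iso: "\<forall>W. fd_subspace scale W \<and> W \<noteq> {0} \<longrightarrow>
       real (dim (sprod scale V W)) \<ge> real (dim W) + c * real (dim W) powr ((d - 1) / d)"
  shows "d \<le> 2"
proof (rule ccontr)
  assume "\<not> d \<le> 2"
  then have d2: "d > 2" by simp
  define f where "f m = real (dim (spow scale V m))" for m
  have step: "f (Suc m) \<ge> f m + c * f m powr ((d - 1) / d)" for m
    using iso spow_fd[OF V, of m] spow_nz[OF V, of m] unfolding f_def by simp
  obtain \<kappa> where k: "\<kappa> > 0" "\<forall>m. (\<kappa> * real m) powr d \<le> f m"
    using growth[of c d f, OF c _ _ step] d2 spow_dim_pos[OF V] unfolding f_def by fastforce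
  obtain A where A: "A \<ge> 1" "\<forall>m\<ge>1. f m \<le> A * real m ^ 2"
    using subframe_growth_upper[OF V] unfolding f_def by blast
  have "\<forall>m::nat. m \<ge> 1 \<longrightarrow> (\<kappa> * real m) powr d \<le> A * real m ^ 2"
    using k(2) A(2) order_trans by blast
  then show False using poly_growth_contra[OF k(1) d2] by blast
qed

lemma V0_iso2: "fd_subspace scale W \<Longrightarrow>
    real (dim (sprod scale V0 W)) \<ge> real (dim W) + 1 * real (dim W) powr ((2 - 1) / 2)"
  using V0_iso[of W] by (simp add: powr_half_sqrt)

lemma V0_growth: "\<exists>\<kappa>>0. \<forall>m. (\<kappa> * real m) powr 2 \<le> real (dim (spow scale V0 m))"
proof -
  define f where "f m = real (dim (spow scale V0 m))" for m
  have step: "f (Suc m) \<ge> f m + 1 * f m powr ((2 - 1) / 2)" for m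
    using V0_iso2[OF spow_fd[OF V0_subframe, of m]] unfolding f_def by simp
  show ?thesis
    using growth[of 1 2 f, OF _ _ _ step] spow_dim_pos[OF V0_subframe] unfolding f_def by fastforce
qed

lemma GK_eq: "GKdim scale = 2"
  unfolding GKdim_def
proof (rule antisym)
  show "(SUP V\<in>{V. subframe scale V}. limsup (\<lambda>m. ereal (ln (real (dim (spow scale V m))) / ln (real m)))) \<le> 2"
  proof (rule SUP_least)
    fix V assume "V \<in> {V. subframe scale V}"
    then have V: "subframe scale V" by simp
    obtain A where A: "A \<ge> 1" "\<forall>m\<ge>1. real (dim (spow scale V m)) \<le> A * real m ^ 2"
      using subframe_growth_upper[OF V] by blast
    show "limsup (\<lambda>m. ereal (ln (real (dim (spow scale V m))) / ln (real m))) \<le> 2"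
      by (rule limsup_upper[OF A(1)]) (use A(2) spow_dim_pos[OF V] in auto)
  qed
  obtain \<kappa> where k: "\<kappa> > 0" "\<forall>m. (\<kappa> * real m) powr 2 \<le> real (dim (spow scale V0 m))"
    using V0_growth by blast
  have "2 \<le> limsup (\<lambda>m. ereal (ln (real (dim (spow scale V0 m))) / ln (real m)))"
    by (rule limsup_lower[OF k(1)]) (use k(2) in auto)
  also have "\<dots> \<le> (SUP V\<in>{V. subframe scale V}. limsup (\<lambda>m. ereal (ln (real (dim (spow scale V m))) / ln (real m))))"
    using V0_subframe by (intro SUP_upper) simp
  finally show "2 \<le> (SUP V\<in>{V. subframe scale V}. limsup (\<lambda>m. ereal (ln (real (dim (spow scale V m))) / ln (real m))))" .
qed

lemma LD_eq: "LDdim scale = 2"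
proof -
  have notall: "\<not> (\<forall>V. subframe scale V \<longrightarrow>
            (\<exists>W. fd_subspace scale W \<and> W \<noteq> {0} \<and>
                 dim (sprod scale V W) = dim W))"
  proof
    assume "\<forall>V. subframe scale V \<longrightarrow> (\<exists>W. fd_subspace scale W \<and> W \<noteq> {0} \<and> dim (sprod scale V W) = dim W)"
    then obtain W where W: "fd_subspace scale W" "W \<noteq> {0}" "dim (sprod scale V0 W) = dim W"
      using V0_subframe by blast
    have "real (dim W) \<ge> 1" using fd_dim_pos[OF W(1,2)] by simp
    then have "sqrt (real (dim W)) \<ge> 1" by simp
    then show False using V0_iso[OF W(1)] W(3) by simp
  qed
  define S where "S = {ereal d | d. d > 0 \<and> (\<exists>V. subframe scale V \<and>
            (\<exists>c>0. \<forall>W. fd_subspace scale W \<and> W \<noteq> {0} \<longrightarrow>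
               real (dim (sprod scale V W)) \<ge>
                 real (dim W) + c * real (dim W) powr ((d - 1) / d)))}"
  have "LDdim scale = Sup S" unfolding LDdim_def S_def by (rule if_not_P[OF notall])
  also have "Sup S = 2"
  proof (rule antisym)
    show "Sup S \<le> 2"
    proof (rule Sup_least)
      fix e assume "e \<in> S"
      then obtain d V c where "e = ereal d" "d > 0" "subframe scale V" "c > 0"
        "\<forall>W. fd_subspace scale W \<and> W \<noteq> {0} \<longrightarrow>
               real (dim (sprod scale V W)) \<ge> real (dim W) + c * real (dim W) powr ((d - 1) / d)"
        unfolding S_def by blast
      then show "e \<le> 2" using LD_set_le2 by simp
    qed
    have "ereal 2 \<in> S" unfolding S_def using V0_subframe V0_iso2
      by (intro CollectI exI[of _ 2]) (auto intro!: exI[of _ V0] exI[of _ 1])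
    then show "2 \<le> Sup S" by (simp add: Sup_upper)
  qed
  finally show ?thesis .
qed

end

theorem proposition5p10:
  fixes scale :: "complex \<Rightarrow> 'r::ring_1 \<Rightarrow> 'r"
    and x y :: 'r
    and \<alpha> \<delta> :: "complex poly \<Rightarrow> complex poly"
    and \<iota> :: "'r \<Rightarrow> 'q::division_ring"
  assumes "poly_alg_aut \<alpha>"
    and "alpha_derivation \<alpha> \<delta>"
    and "is_ore_extension scale x y \<alpha> \<delta>"
    and "is_division_ring_of_fractions \<iota>"
    and "{z. ring_center z} = range (\<lambda>c. \<iota> (scale c 1))"
  shows "(LD_stable scale \<and> LDdim scale = 2) \<longleftrightarrow> locally_algebraic \<alpha>"
proof -
  have "ore scale x y \<alpha> \<delta>"
    using assms(1,2,3) unfolding ore_def ore_axioms_def is_ore_extension_def complex_algebra_def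
    by blast
  then interpret O: ore scale x y \<alpha> \<delta> .
  have "LD_stable scale \<and> LDdim scale = 2"
    using O.LD_eq O.GK_eq unfolding LD_stable_def by simp
  moreover have "locally_algebraic \<alpha>" by (rule locally_alg[OF assms(1)])
  ultimately show ?thesis by simp
qed

end
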